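(* Let $a\ge 2$ and $n_1,n_2\ge1$. Let $M_{n_1}\in\mathrm{Sym}_{n_1}(\mathbb{Z})$ and $M'_{n_2}\in\mathrm{Sym}_{n_2}(\mathbb{Z})$ be fixed with $\mathrm{Cok}_*^{(a)}(M_{n_1}\bmod a)\simeq\mathrm{Cok}_*^{(a)}(M'_{n_2}\bmod a)$. Let $z,\xi_1,\xi_2,\ldots$ be independent and uniformly distributed in $\{0,1,\ldots,a-1\}$. Then the equivalence classes $$\mathrm{Cok}_*^{(a)}\left(\begin{pmatrix}M_{n_1}&\boldsymbol{\xi}_1\\\boldsymbol{\xi}_1^T&z\end{pmatrix}\bmod a\right)\quad\text{and}\quad\mathrm{Cok}_*^{(a)}\left(\begin{pmatrix}M'_{n_2}&\boldsymbol{\xi}_2\\\boldsymbol{\xi}_2^T&z\end{pmatrix}\bmod a\right)$$ have the same distribution, where $\boldsymbol{\xi}_1=(\xi_1,\ldots,\xi_{n_1})^T$ and $\boldsymbol{\xi}_2=(\xi_1,\ldots,\xi_{n_2})^T$.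
   Context: Cokernel with quasi-pairing: for a prime power $p^e$ and $H_{n_1}\in\mathrm{Sym}_{n_1}(\mathbb{Z}/p^e\mathbb{Z})$, $H'_{n_2}\in\mathrm{Sym}_{n_2}(\mathbb{Z}/p^e\mathbb{Z})$, write $\mathrm{Cok}_*^{(p^e)}(H_{n_1})\simeq\mathrm{Cok}_*^{(p^e)}(H'_{n_2})$ if there exist $n\ge\max\{n_1,n_2\}$ and invertible symmetric $H^c\in\mathrm{Sym}_{n-n_1}(\mathbb{Z}/p^e\mathbb{Z})\cap\mathrm{GL}_{n-n_1}(\mathbb{Z}/p^e\mathbb{Z})$, $H'^c\in\mathrm{Sym}_{n-n_2}(\mathbb{Z}/p^e\mathbb{Z})\cap\mathrm{GL}_{n-n_2}(\mathbb{Z}/p^e\mathbb{Z})$ such that $\mathrm{diag}(H^c,H_{n_1})=U\,\mathrm{diag}(H'^c,H'_{n_2})\,U^T$ for some $U\in\mathrm{GL}_n(\mathbb{Z}/p^e\mathbb{Z})$. This is an equivalence relation; $\mathrm{Cok}_*^{(p^e)}(H)$ denotes the class of $H$. For $a=p_1^{e_1}\cdots p_l^{e_l}$ and symmetric matrices $H,H'$ over $\mathbb{Z}/a\mathbb{Z}$, $\mathrm{Cok}_*^{(a)}(H)\simeq\mathrm{Cok}_*^{(a)}(H')$ means $\mathrm{Cok}_*^{(p_i^{e_i})}(H\bmod p_i^{e_i})\simeq\mathrm{Cok}_*^{(p_i^{e_i})}(H'\bmod p_i^{e_i})$ for all $i$. $\bmod a$ denotes entrywise reduction. *)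

theory Defs
  imports "HOL-Probability.Probability_Mass_Function" "HOL-Computational_Algebra.Primes" "HOL-Number_Theory.Cong"
begin

text \<open>Square matrices of size n are represented as functions nat => nat => int;
  only the entries with indices below n are meaningful. A matrix over Z/qZ is
  represented by any integer lift; everything is stated up to congruence mod q.\<close>

type_synonym imat = "nat \<Rightarrow> nat \<Rightarrow> int"

definition sym_mod :: "int \<Rightarrow> nat \<Rightarrow> imat \<Rightarrow> bool" where
  "sym_mod q n H \<longleftrightarrow> (\<forall>i<n. \<forall>j<n. [H i j = H j i] (mod q))"

definition sym_int :: "nat \<Rightarrow> imat \<Rightarrow> bool" where
  "sym_int n H \<longleftrightarrow> (\<forall>i<n. \<forall>j<n. H i j = H j i)"

definition mat_eq_mod :: "int \<Rightarrow> nat \<Rightarrow> imat \<Rightarrow> imat \<Rightarrow> bool" where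
  "mat_eq_mod q n A B \<longleftrightarrow> (\<forall>i<n. \<forall>j<n. [A i j = B i j] (mod q))"

definition mat_mult :: "nat \<Rightarrow> imat \<Rightarrow> imat \<Rightarrow> imat" where
  "mat_mult n A B = (\<lambda>i j. \<Sum>k<n. A i k * B k j)"

definition mat_transp :: "imat \<Rightarrow> imat" where
  "mat_transp A = (\<lambda>i j. A j i)"

definition id_mat :: imat where
  "id_mat = (\<lambda>i j. if i = j then 1 else 0)"

definition invertible_mod :: "int \<Rightarrow> nat \<Rightarrow> imat \<Rightarrow> bool" where
  "invertible_mod q n U \<longleftrightarrow> (\<exists>V. mat_eq_mod q n (mat_mult n U V) id_mat
                                 \<and> mat_eq_mod q n (mat_mult n V U) id_mat)"

definition block_diag :: "nat \<Rightarrow> imat \<Rightarrow> imat \<Rightarrow> imat" where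
  "block_diag k A B = (\<lambda>i j. if i < k \<and> j < k then A i j
                           else if k \<le> i \<and> k \<le> j then B (i - k) (j - k) else 0)"

definition cok_equiv_pp :: "int \<Rightarrow> nat \<Rightarrow> imat \<Rightarrow> nat \<Rightarrow> imat \<Rightarrow> bool" where
  "cok_equiv_pp q n1 H n2 H' \<longleftrightarrow>
     (\<exists>n Hc Hc' U. n \<ge> max n1 n2 \<and>
        sym_mod q (n - n1) Hc \<and> invertible_mod q (n - n1) Hc \<and>
        sym_mod q (n - n2) Hc' \<and> invertible_mod q (n - n2) Hc' \<and>
        invertible_mod q n U \<and>
        mat_eq_mod q n (block_diag (n - n1) Hc H)
          (mat_mult n (mat_mult n U (block_diag (n - n2) Hc' H')) (mat_transp U)))"

text \<open>The relation for general a = p_1^{e_1} ... p_l^{e_l}: componentwise at each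
  exact prime power dividing a (reduction mod p^e is implicit in congruence mod p^e).\<close>
definition cok_equiv :: "nat \<Rightarrow> nat \<Rightarrow> imat \<Rightarrow> nat \<Rightarrow> imat \<Rightarrow> bool" where
  "cok_equiv a n1 H n2 H' \<longleftrightarrow>
     (\<forall>p \<in> prime_factors a. cok_equiv_pp (int (p ^ multiplicity p a)) n1 H n2 H')"

definition cok_class :: "nat \<Rightarrow> nat \<Rightarrow> imat \<Rightarrow> (nat \<times> imat) set" where
  "cok_class a n H = {(m, K). sym_mod (int a) m K \<and> cok_equiv a n H m K}"

definition border :: "nat \<Rightarrow> imat \<Rightarrow> (nat \<Rightarrow> int) \<Rightarrow> int \<Rightarrow> imat" where
  "border n M xi z = (\<lambda>i j. if i < n \<and> j < n then M i j
                          else if i < n \<and> j = n then xi i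
                          else if i = n \<and> j < n then xi j
                          else if i = n \<and> j = n then z else 0)"

text \<open>Sample space: z and xi_1,...,xi_m (stored as xi 0, ..., xi (m-1)) uniform in
  {0,...,a-1}; the remaining entries of xi are fixed to 0 (they do not matter).\<close>
definition sample_space :: "nat \<Rightarrow> nat \<Rightarrow> (int \<times> (nat \<Rightarrow> int)) set" where
  "sample_space a m = {(z, xi). z \<in> {0..<int a} \<and> (\<forall>i<m. xi i \<in> {0..<int a}) \<and> (\<forall>i\<ge>m. xi i = 0)}"

end

theory Submission
  imports Defs
begin

lemma mat_mult_assoc: "mat_mult n (mat_mult n A B) C = mat_mult n A (mat_mult n B C)"
  unfolding mat_mult_def
  by (auto simp: fun_eq_iff sum_distrib_left sum_distrib_right mult.assoc intro: sum.swap)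

lemma mat_transp_mult: "mat_transp (mat_mult n A B) = mat_mult n (mat_transp B) (mat_transp A)"
  by (simp add: fun_eq_iff mat_mult_def mat_transp_def mult.commute)

lemma mat_transp_transp[simp]: "mat_transp (mat_transp A) = A"
  by (simp add: mat_transp_def)

lemma mat_transp_id[simp]: "mat_transp id_mat = id_mat"
  by (auto simp: mat_transp_def id_mat_def fun_eq_iff)

lemma meq_refl[simp, intro]: "mat_eq_mod q n A A"
  by (simp add: mat_eq_mod_def)

lemma meq_sym: "mat_eq_mod q n A B \<Longrightarrow> mat_eq_mod q n B A"
  by (simp add: mat_eq_mod_def cong_sym)

lemma meq_trans: "mat_eq_mod q n A B \<Longrightarrow> mat_eq_mod q n B C \<Longrightarrow> mat_eq_mod q n A C"
  unfolding mat_eq_mod_def by (blast intro: cong_trans)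

lemma meq_eqI: "(\<And>i j. i < n \<Longrightarrow> j < n \<Longrightarrow> A i j = B i j) \<Longrightarrow> mat_eq_mod q n A B"
  by (simp add: mat_eq_mod_def)

lemma meq_mult: "mat_eq_mod q n A A' \<Longrightarrow> mat_eq_mod q n B B' \<Longrightarrow>
   mat_eq_mod q n (mat_mult n A B) (mat_mult n A' B')"
  unfolding mat_eq_mod_def mat_mult_def
  by (auto intro!: cong_sum cong_mult)

lemma meq_transp: "mat_eq_mod q n A B \<Longrightarrow> mat_eq_mod q n (mat_transp A) (mat_transp B)"
  by (simp add: mat_eq_mod_def mat_transp_def)

lemma meq_dvd: "mat_eq_mod q n A B \<Longrightarrow> q' dvd q \<Longrightarrow> mat_eq_mod q' n A B"
  unfolding mat_eq_mod_def by (blast intro: cong_dvd_modulus)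

lemma delta_l: "i < (n::nat) \<Longrightarrow> (\<Sum>k<n. (if i = k then 1 else 0) * f k) = (f i::int)"
proof -
  assume "i < n"
  have "(\<Sum>k<n. (if i = k then 1 else 0) * f k) = (\<Sum>k<n. if i = k then f k else 0)"
    by (rule sum.cong) auto
  then show ?thesis using \<open>i < n\<close> by (simp add: sum.delta sum.delta')
qed

lemma delta_r: "j < (n::nat) \<Longrightarrow> (\<Sum>k<n. f k * (if k = j then 1 else 0)) = (f j::int)"
proof -
  assume "j < n"
  have "(\<Sum>k<n. f k * (if k = j then 1 else 0)) = (\<Sum>k<n. if j = k then f k else 0)"
    by (rule sum.cong) auto
  then show ?thesis using \<open>j < n\<close> by (simp add: sum.delta sum.delta')
qed

lemma mult_id_left: "mat_eq_mod q n (mat_mult n id_mat A) A"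
  unfolding mat_eq_mod_def mat_mult_def id_mat_def
  by (simp add: delta_l)

lemma mult_id_right: "mat_eq_mod q n (mat_mult n A id_mat) A"
  unfolding mat_eq_mod_def mat_mult_def id_mat_def
  by (simp add: delta_r)



lemma inv_id: "invertible_mod q n id_mat"
  unfolding invertible_mod_def by (rule exI[of _ id_mat]) (simp add: mult_id_left)

lemma inv_mult:
  assumes "invertible_mod q n U" "invertible_mod q n V"
  shows "invertible_mod q n (mat_mult n U V)"
proof -
  obtain U' where U': "mat_eq_mod q n (mat_mult n U U') id_mat" "mat_eq_mod q n (mat_mult n U' U) id_mat"
    using assms(1) unfolding invertible_mod_def by blast
  obtain V' where V': "mat_eq_mod q n (mat_mult n V V') id_mat" "mat_eq_mod q n (mat_mult n V' V) id_mat"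
    using assms(2) unfolding invertible_mod_def by blast
  have e1: "mat_mult n (mat_mult n U V) (mat_mult n V' U') = mat_mult n U (mat_mult n (mat_mult n V V') U')"
      by (simp add: mat_mult_assoc)
  have e2: "mat_eq_mod q n (mat_mult n U (mat_mult n (mat_mult n V V') U')) (mat_mult n U (mat_mult n id_mat U'))"
      by (rule meq_mult[OF meq_refl meq_mult[OF V'(1) meq_refl]])
  have e3: "mat_eq_mod q n (mat_mult n U (mat_mult n id_mat U')) (mat_mult n U U')"
      by (rule meq_mult[OF meq_refl mult_id_left])
  have 1: "mat_eq_mod q n (mat_mult n (mat_mult n U V) (mat_mult n V' U')) id_mat"
    unfolding e1 by (rule meq_trans[OF e2 meq_trans[OF e3 U'(1)]])
  have f1: "mat_mult n (mat_mult n V' U') (mat_mult n U V) = mat_mult n V' (mat_mult n (mat_mult n U' U) V)"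
      by (simp add: mat_mult_assoc)
  have f2: "mat_eq_mod q n (mat_mult n V' (mat_mult n (mat_mult n U' U) V)) (mat_mult n V' (mat_mult n id_mat V))"
      by (rule meq_mult[OF meq_refl meq_mult[OF U'(2) meq_refl]])
  have f3: "mat_eq_mod q n (mat_mult n V' (mat_mult n id_mat V)) (mat_mult n V' V)"
      by (rule meq_mult[OF meq_refl mult_id_left])
  have 2: "mat_eq_mod q n (mat_mult n (mat_mult n V' U') (mat_mult n U V)) id_mat"
    unfolding f1 by (rule meq_trans[OF f2 meq_trans[OF f3 V'(2)]])
  show ?thesis unfolding invertible_mod_def using 1 2 by blast
qed

lemma inv_transp:
  assumes "invertible_mod q n U"
  shows "invertible_mod q n (mat_transp U)"
proof -
  obtain U' where U': "mat_eq_mod q n (mat_mult n U U') id_mat" "mat_eq_mod q n (mat_mult n U' U) id_mat"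
    using assms(1) unfolding invertible_mod_def by blast
  have "mat_eq_mod q n (mat_mult n (mat_transp U) (mat_transp U')) id_mat"
    using meq_transp[OF U'(2)] by (simp add: mat_transp_mult)
  moreover have "mat_eq_mod q n (mat_mult n (mat_transp U') (mat_transp U)) id_mat"
    using meq_transp[OF U'(1)] by (simp add: mat_transp_mult)
  ultimately show ?thesis unfolding invertible_mod_def by blast
qed

lemma inv_dvd: "invertible_mod q n U \<Longrightarrow> q' dvd q \<Longrightarrow> invertible_mod q' n U"
  unfolding invertible_mod_def using meq_dvd by blast

lemma sym_dvd: "sym_mod q n U \<Longrightarrow> q' dvd q \<Longrightarrow> sym_mod q' n U"
  unfolding sym_mod_def using cong_dvd_modulus by blast

definition cong_rel :: "int \<Rightarrow> nat \<Rightarrow> imat \<Rightarrow> imat \<Rightarrow> bool" where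
  "cong_rel q n X Y \<longleftrightarrow> (\<exists>U. invertible_mod q n U \<and>
      mat_eq_mod q n X (mat_mult n (mat_mult n U Y) (mat_transp U)))"

lemma sandwich_id: "mat_eq_mod q n (mat_mult n (mat_mult n id_mat Y) (mat_transp id_mat)) Y"
  by (simp, rule meq_trans[OF mult_id_right mult_id_left])

lemma cong_rel_eq: "mat_eq_mod q n X Y \<Longrightarrow> cong_rel q n X Y"
  unfolding cong_rel_def
  apply (rule exI[of _ id_mat])
  apply (simp only: inv_id simp_thms)
  by (rule meq_trans[OF _ meq_sym[OF sandwich_id]])

lemma cong_rel_refl: "cong_rel q n X X"
  by (rule cong_rel_eq) simp

lemma sandwich_cong: "mat_eq_mod q n X Y \<Longrightarrow>
  mat_eq_mod q n (mat_mult n (mat_mult n U X) (mat_transp U)) (mat_mult n (mat_mult n U Y) (mat_transp U))"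
  by (rule meq_mult[OF meq_mult[OF meq_refl] meq_refl])

lemma sandwich_comp: "mat_mult n (mat_mult n U (mat_mult n (mat_mult n V Y) (mat_transp V))) (mat_transp U)
   = mat_mult n (mat_mult n (mat_mult n U V) Y) (mat_transp (mat_mult n U V))"
  by (simp add: mat_mult_assoc mat_transp_mult)

lemma cong_rel_trans: "cong_rel q n X Y \<Longrightarrow> cong_rel q n Y Z \<Longrightarrow> cong_rel q n X Z"
proof -
  assume "cong_rel q n X Y" "cong_rel q n Y Z"
  then obtain U V where U: "invertible_mod q n U" "mat_eq_mod q n X (mat_mult n (mat_mult n U Y) (mat_transp U))"
    and V: "invertible_mod q n V" "mat_eq_mod q n Y (mat_mult n (mat_mult n V Z) (mat_transp V))"
    unfolding cong_rel_def by blast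
  have "mat_eq_mod q n X (mat_mult n (mat_mult n (mat_mult n U V) Z) (mat_transp (mat_mult n U V)))"
    using meq_trans[OF U(2) sandwich_cong[OF V(2)]] by (simp only: sandwich_comp)
  then show ?thesis unfolding cong_rel_def using inv_mult[OF U(1) V(1)] by blast
qed

lemma cong_rel_sym: "cong_rel q n X Y \<Longrightarrow> cong_rel q n Y X"
proof -
  assume "cong_rel q n X Y"
  then obtain U where U: "invertible_mod q n U" "mat_eq_mod q n X (mat_mult n (mat_mult n U Y) (mat_transp U))"
    unfolding cong_rel_def by blast
  obtain V where V: "mat_eq_mod q n (mat_mult n U V) id_mat" "mat_eq_mod q n (mat_mult n V U) id_mat"
    using U(1) unfolding invertible_mod_def by blast
  have iV: "invertible_mod q n V" using V unfolding invertible_mod_def by blast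
  have a: "mat_eq_mod q n (mat_mult n (mat_mult n V X) (mat_transp V))
     (mat_mult n (mat_mult n (mat_mult n V U) Y) (mat_transp (mat_mult n V U)))"
    using sandwich_cong[OF U(2), of V] by (simp only: sandwich_comp)
  have b: "mat_eq_mod q n (mat_mult n (mat_mult n (mat_mult n V U) Y) (mat_transp (mat_mult n V U)))
     (mat_mult n (mat_mult n id_mat Y) (mat_transp id_mat))"
    by (rule meq_mult[OF meq_mult[OF V(2) meq_refl] meq_transp[OF V(2)]])
  have "mat_eq_mod q n Y (mat_mult n (mat_mult n V X) (mat_transp V))"
    by (rule meq_sym[OF meq_trans[OF a meq_trans[OF b sandwich_id]]])
  then show ?thesis unfolding cong_rel_def using iV by blast
qed

lemma cong_rel_dvd: "cong_rel q n X Y \<Longrightarrow> q' dvd q \<Longrightarrow> cong_rel q' n X Y"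
  unfolding cong_rel_def using meq_dvd inv_dvd by blast



lemma sum_split_add: "(\<Sum>t<k+m. f t) = (\<Sum>t<k. f t) + (\<Sum>s<m. f (k+s))" for f :: "nat \<Rightarrow> int"
  by (induction m) (simp_all add: add.assoc)

lemma bd_mult:
  assumes "i < k+m" "j < k+m"
  shows "mat_mult (k+m) (block_diag k A B) (block_diag k C E) i j = block_diag k (mat_mult k A C) (mat_mult m B E) i j"
  using assms unfolding mat_mult_def block_diag_def
  by (auto simp: sum_split_add)

lemma bd_mult_meq: "mat_eq_mod q (k+m) (mat_mult (k+m) (block_diag k A B) (block_diag k C E))
   (block_diag k (mat_mult k A C) (mat_mult m B E))"
  by (rule meq_eqI) (rule bd_mult)

lemma bd_transp: "mat_transp (block_diag k A B) = block_diag k (mat_transp A) (mat_transp B)"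
  by (auto simp: fun_eq_iff mat_transp_def block_diag_def)

lemma bd_meq: "mat_eq_mod q k A A' \<Longrightarrow> mat_eq_mod q m B B' \<Longrightarrow>
   mat_eq_mod q (k+m) (block_diag k A B) (block_diag k A' B')"
  unfolding mat_eq_mod_def block_diag_def
  by (auto simp: cong_refl)

lemma bd_id: "block_diag k id_mat id_mat = id_mat"
  by (auto simp: fun_eq_iff id_mat_def block_diag_def)

lemma bd_assoc: "block_diag k P (block_diag c A M) = block_diag (k+c) (block_diag k P A) M"
  by (auto simp: fun_eq_iff block_diag_def)

lemma bd_zero: "block_diag 0 A B = B"
  by (auto simp: fun_eq_iff block_diag_def)

lemma inv_bd:
  assumes "invertible_mod q k U1" "invertible_mod q m U2"
  shows "invertible_mod q (k+m) (block_diag k U1 U2)"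
proof -
  obtain V1 where V1: "mat_eq_mod q k (mat_mult k U1 V1) id_mat" "mat_eq_mod q k (mat_mult k V1 U1) id_mat"
    using assms(1) unfolding invertible_mod_def by blast
  obtain V2 where V2: "mat_eq_mod q m (mat_mult m U2 V2) id_mat" "mat_eq_mod q m (mat_mult m V2 U2) id_mat"
    using assms(2) unfolding invertible_mod_def by blast
  have "mat_eq_mod q (k+m) (mat_mult (k+m) (block_diag k U1 U2) (block_diag k V1 V2)) id_mat"
    using meq_trans[OF bd_mult_meq bd_meq[OF V1(1) V2(1)]] by (simp only: bd_id)
  moreover have "mat_eq_mod q (k+m) (mat_mult (k+m) (block_diag k V1 V2) (block_diag k U1 U2)) id_mat"
    using meq_trans[OF bd_mult_meq bd_meq[OF V1(2) V2(2)]] by (simp only: bd_id)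
  ultimately show ?thesis unfolding invertible_mod_def by blast
qed

lemma sym_bd: "sym_mod q k A \<Longrightarrow> sym_mod q m B \<Longrightarrow> sym_mod q (k+m) (block_diag k A B)"
  unfolding sym_mod_def block_diag_def
  by (auto simp: cong_refl)

lemma cong_rel_bd:
  assumes "cong_rel q k X X'" "cong_rel q m Y Y'"
  shows "cong_rel q (k+m) (block_diag k X Y) (block_diag k X' Y')"
proof -
  obtain U1 where U1: "invertible_mod q k U1" "mat_eq_mod q k X (mat_mult k (mat_mult k U1 X') (mat_transp U1))"
    using assms(1) unfolding cong_rel_def by blast
  obtain U2 where U2: "invertible_mod q m U2" "mat_eq_mod q m Y (mat_mult m (mat_mult m U2 Y') (mat_transp U2))"
    using assms(2) unfolding cong_rel_def by blast
  let ?U = "block_diag k U1 U2"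
  have a: "mat_eq_mod q (k+m) (mat_mult (k+m) (mat_mult (k+m) ?U (block_diag k X' Y')) (mat_transp ?U))
     (mat_mult (k+m) (block_diag k (mat_mult k U1 X') (mat_mult m U2 Y')) (block_diag k (mat_transp U1) (mat_transp U2)))"
    unfolding bd_transp by (rule meq_mult[OF bd_mult_meq meq_refl])
  have b: "mat_eq_mod q (k+m) (mat_mult (k+m) (block_diag k (mat_mult k U1 X') (mat_mult m U2 Y')) (block_diag k (mat_transp U1) (mat_transp U2)))
     (block_diag k X Y)"
    by (rule meq_trans[OF bd_mult_meq meq_sym[OF bd_meq[OF U1(2) U2(2)]]])
  show ?thesis unfolding cong_rel_def
    using inv_bd[OF U1(1) U2(1)] meq_sym[OF meq_trans[OF a b]] by blast
qed

definition perm_mat :: "(nat \<Rightarrow> nat) \<Rightarrow> imat" where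
  "perm_mat \<sigma> = (\<lambda>i j. if j = \<sigma> i then 1 else 0)"

lemma perm_sandwich:
  assumes "i < n" "j < n" "\<forall>i<n. \<sigma> i < n"
  shows "mat_mult n (mat_mult n (perm_mat \<sigma>) X) (mat_transp (perm_mat \<sigma>)) i j = X (\<sigma> i) (\<sigma> j)"
proof -
  have l: "mat_mult n (perm_mat \<sigma>) X i' t = X (\<sigma> i') t" if "i' < n" for i' t
  proof -
    have "mat_mult n (perm_mat \<sigma>) X i' t = (\<Sum>s<n. if \<sigma> i' = s then X s t else 0)"
      unfolding mat_mult_def perm_mat_def by (rule sum.cong) auto
    also have "\<dots> = X (\<sigma> i') t" using assms(3) that by (simp add: sum.delta)
    finally show ?thesis .
  qed
  have "mat_mult n (mat_mult n (perm_mat \<sigma>) X) (mat_transp (perm_mat \<sigma>)) i j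
      = (\<Sum>t<n. if \<sigma> j = t then X (\<sigma> i) t else 0)"
    unfolding mat_mult_def[of n "mat_mult n (perm_mat \<sigma>) X"] 
    using l[OF assms(1)] unfolding mat_transp_def perm_mat_def by (intro sum.cong) auto
  also have "\<dots> = X (\<sigma> i) (\<sigma> j)" using assms by (simp add: sum.delta)
  finally show ?thesis .
qed

lemma perm_inv:
  assumes "\<forall>i<n. \<sigma> i < n" "\<forall>i<n. \<tau> i < n" "\<forall>i<n. \<tau> (\<sigma> i) = i" "\<forall>i<n. \<sigma> (\<tau> i) = i"
  shows "invertible_mod q n (perm_mat \<sigma>)"
proof -
  have t: "mat_eq_mod q n (mat_transp (perm_mat \<sigma>)) (perm_mat \<tau>)"
    unfolding mat_eq_mod_def mat_transp_def perm_mat_def using assms by (auto simp: cong_refl)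
  have 1: "mat_eq_mod q n (mat_mult n (perm_mat \<sigma>) (mat_transp (perm_mat \<sigma>))) id_mat"
  proof -
    have "mat_eq_mod q n (mat_mult n (mat_mult n (perm_mat \<sigma>) id_mat) (mat_transp (perm_mat \<sigma>))) id_mat"
      unfolding mat_eq_mod_def using perm_sandwich[OF _ _ assms(1)] assms
      by (auto simp: id_mat_def cong_refl) metis
    then show ?thesis using meq_trans[OF meq_mult[OF meq_sym[OF mult_id_right] meq_refl]] by blast
  qed
  have 2: "mat_eq_mod q n (mat_mult n (perm_mat \<tau>) (mat_transp (perm_mat \<tau>))) id_mat"
  proof -
    have "mat_eq_mod q n (mat_mult n (mat_mult n (perm_mat \<tau>) id_mat) (mat_transp (perm_mat \<tau>))) id_mat"
      unfolding mat_eq_mod_def using perm_sandwich[OF _ _ assms(2)] assms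
      by (auto simp: id_mat_def cong_refl) metis
    then show ?thesis using meq_trans[OF meq_mult[OF meq_sym[OF mult_id_right] meq_refl]] by blast
  qed
  have t2: "mat_eq_mod q n (perm_mat \<sigma>) (mat_transp (perm_mat \<tau>))"
    using meq_transp[OF t] by simp
  have 3: "mat_eq_mod q n (mat_mult n (mat_transp (perm_mat \<sigma>)) (perm_mat \<sigma>)) id_mat"
    by (rule meq_trans[OF meq_mult[OF t t2] 2])
  show ?thesis unfolding invertible_mod_def using 1 3 by blast
qed

lemma cong_rel_swap: "cong_rel q (k+l) (block_diag k X Y) (block_diag l Y X)"
proof -
  define \<sigma> where "\<sigma> = (\<lambda>i::nat. if i < k then i + l else i - k)"
  define \<tau> where "\<tau> = (\<lambda>i::nat. if i < l then i + k else i - l)"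
  have inv: "invertible_mod q (k+l) (perm_mat \<sigma>)"
    by (rule perm_inv[of _ \<sigma> \<tau>]) (auto simp: \<sigma>_def \<tau>_def)
  have "mat_eq_mod q (k+l) (block_diag k X Y) (mat_mult (k+l) (mat_mult (k+l) (perm_mat \<sigma>) (block_diag l Y X)) (mat_transp (perm_mat \<sigma>)))"
    unfolding mat_eq_mod_def
  proof (intro allI impI)
    fix i j assume ij: "i < k+l" "j < k+l"
    have "mat_mult (k+l) (mat_mult (k+l) (perm_mat \<sigma>) (block_diag l Y X)) (mat_transp (perm_mat \<sigma>)) i j
       = block_diag l Y X (\<sigma> i) (\<sigma> j)"
      by (rule perm_sandwich) (use ij in \<open>auto simp: \<sigma>_def\<close>)
    also have "\<dots> = block_diag k X Y i j"
      using ij by (auto simp: \<sigma>_def block_diag_def)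
    finally show "[block_diag k X Y i j = mat_mult (k+l) (mat_mult (k+l) (perm_mat \<sigma>) (block_diag l Y X)) (mat_transp (perm_mat \<sigma>)) i j] (mod q)"
      by simp
  qed
  then show ?thesis unfolding cong_rel_def using inv by blast
qed



definition isym :: "int \<Rightarrow> nat \<Rightarrow> imat \<Rightarrow> bool" where
  "isym q c A \<longleftrightarrow> sym_mod q c A \<and> invertible_mod q c A"

lemma isym_bd: "isym q k A \<Longrightarrow> isym q m B \<Longrightarrow> isym q (k+m) (block_diag k A B)"
  unfolding isym_def using sym_bd inv_bd by blast

lemma isym_id: "isym q k id_mat"
  unfolding isym_def by (intro conjI inv_id) (auto simp: sym_mod_def id_mat_def cong_refl)

lemma isym_dvd: "isym q k A \<Longrightarrow> q' dvd q \<Longrightarrow> isym q' k A"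
  unfolding isym_def using sym_dvd inv_dvd by blast

lemma cok_pp_iff: "cok_equiv_pp q n1 H n2 H' \<longleftrightarrow>
  (\<exists>c c' A A'. c + n1 = c' + n2 \<and> isym q c A \<and> isym q c' A' \<and>
     cong_rel q (c+n1) (block_diag c A H) (block_diag c' A' H'))"
proof
  assume "cok_equiv_pp q n1 H n2 H'"
  then obtain n Hc Hc' U where h: "n \<ge> max n1 n2"
        "sym_mod q (n - n1) Hc" "invertible_mod q (n - n1) Hc"
        "sym_mod q (n - n2) Hc'" "invertible_mod q (n - n2) Hc'"
        "invertible_mod q n U"
        "mat_eq_mod q n (block_diag (n - n1) Hc H)
          (mat_mult n (mat_mult n U (block_diag (n - n2) Hc' H')) (mat_transp U))"
    unfolding cok_equiv_pp_def by blast
  have n1: "n - n1 + n1 = n" and n2: "n - n2 + n2 = n" using h(1) by auto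
  show "\<exists>c c' A A'. c + n1 = c' + n2 \<and> isym q c A \<and> isym q c' A' \<and>
     cong_rel q (c+n1) (block_diag c A H) (block_diag c' A' H')"
    apply (rule exI[of _ "n - n1"], rule exI[of _ "n - n2"], rule exI[of _ Hc], rule exI[of _ Hc'])
    using h n1 n2 unfolding isym_def cong_rel_def by auto
next
  assume "\<exists>c c' A A'. c + n1 = c' + n2 \<and> isym q c A \<and> isym q c' A' \<and>
     cong_rel q (c+n1) (block_diag c A H) (block_diag c' A' H')"
  then obtain c c' A A' U where h: "c + n1 = c' + n2" "isym q c A" "isym q c' A'" "invertible_mod q (c+n1) U"
     "mat_eq_mod q (c+n1) (block_diag c A H) (mat_mult (c+n1) (mat_mult (c+n1) U (block_diag c' A' H')) (mat_transp U))"
    unfolding cong_rel_def by blast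
  have e: "c + n1 - n1 = c" "c + n1 - n2 = c'" using h(1) by auto
  have m: "max n1 n2 \<le> c+n1" using h(1) by simp
  show "cok_equiv_pp q n1 H n2 H'"
    unfolding cok_equiv_pp_def
    apply (rule exI[of _ "c+n1"], rule exI[of _ A], rule exI[of _ A'], rule exI[of _ U])
    apply (simp only: e)
    using h(2-5) m unfolding isym_def by blast
qed

lemma cok_pp_sym: "cok_equiv_pp q n1 H n2 H' \<Longrightarrow> cok_equiv_pp q n2 H' n1 H"
  unfolding cok_pp_iff by (metis cong_rel_sym)

lemma cok_pp_trans:
  assumes "cok_equiv_pp q n1 H n2 H'" "cok_equiv_pp q n2 H' n3 H''"
  shows "cok_equiv_pp q n1 H n3 H''"
proof -
  obtain c c' A A' where h1: "c + n1 = c' + n2" "isym q c A" "isym q c' A'"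
     "cong_rel q (c+n1) (block_diag c A H) (block_diag c' A' H')"
    using assms(1) unfolding cok_pp_iff by blast
  obtain d d' B B' where h2: "d + n2 = d' + n3" "isym q d B" "isym q d' B'"
     "cong_rel q (d+n2) (block_diag d B H') (block_diag d' B' H'')"
    using assms(2) unfolding cok_pp_iff by blast
  define N where "N = d + (c + n1)"
  have s1: "(d+c) + n1 = N" "d + (c+n1) = N" "(d+c') + n2 = N" "(c'+d) + n2 = N" "c' + (d+n2) = N"
     "(c'+d') + n3 = N" using h1(1) h2(1) by (auto simp: N_def)
  have r1: "cong_rel q N (block_diag (d+c) (block_diag d B A) H) (block_diag (d+c') (block_diag d B A') H')"
    using cong_rel_bd[OF cong_rel_refl[of q d B] h1(4)] by (simp only: bd_assoc s1)
  have r2: "cong_rel q N (block_diag (d+c') (block_diag d B A') H') (block_diag (c'+d) (block_diag c' A' B) H')"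
    using cong_rel_bd[OF cong_rel_swap[of q d c' B A'] cong_rel_refl[of q n2 H']]
    by (simp only: s1 add.commute[of c' d])
  have r3: "cong_rel q N (block_diag (c'+d) (block_diag c' A' B) H') (block_diag (c'+d') (block_diag c' A' B') H'')"
    using cong_rel_bd[OF cong_rel_refl[of q c' A'] h2(4)] by (simp only: bd_assoc s1)
  have "cong_rel q ((d+c)+n1) (block_diag (d+c) (block_diag d B A) H) (block_diag (c'+d') (block_diag c' A' B') H'')"
    unfolding s1 by (rule cong_rel_trans[OF r1 cong_rel_trans[OF r2 r3]])
  moreover have "(d+c) + n1 = (c'+d') + n3" using s1 by simp
  ultimately show ?thesis unfolding cok_pp_iff
    using isym_bd[OF h2(2) h1(2)] isym_bd[OF h1(3) h2(3)] by blast
qed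

lemma cok_pp_dvd: "cok_equiv_pp q n1 H n2 H' \<Longrightarrow> q' dvd q \<Longrightarrow> cok_equiv_pp q' n1 H n2 H'"
  unfolding cok_pp_iff using isym_dvd cong_rel_dvd by metis

lemma cok_pp_pad:
  assumes "cok_equiv_pp q n1 H n2 H'"
  shows "\<exists>c0. \<forall>e\<ge>c0. \<exists>c' A A'. e + n1 = c' + n2 \<and> isym q e A \<and> isym q c' A' \<and>
     cong_rel q (e+n1) (block_diag e A H) (block_diag c' A' H')"
proof -
  obtain c c' A A' where h1: "c + n1 = c' + n2" "isym q c A" "isym q c' A'"
     "cong_rel q (c+n1) (block_diag c A H) (block_diag c' A' H')"
    using assms unfolding cok_pp_iff by blast
  have "\<exists>c' A A'. e + n1 = c' + n2 \<and> isym q e A \<and> isym q c' A' \<and>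
     cong_rel q (e+n1) (block_diag e A H) (block_diag c' A' H')" if "e \<ge> c" for e
  proof -
    define d where "d = e - c"
    have s: "d + c = e" "d + (c+n1) = e + n1" "(d+c') + n2 = e + n1" using that h1(1) by (auto simp: d_def)
    have "cong_rel q (e+n1) (block_diag e (block_diag d id_mat A) H) (block_diag (d+c') (block_diag d id_mat A') H')"
      using cong_rel_bd[OF cong_rel_refl[of q d id_mat] h1(4)] by (simp only: bd_assoc s)
    moreover have "isym q e (block_diag d id_mat A)" using isym_bd[OF isym_id h1(2), of d] by (simp only: s)
    ultimately show ?thesis using isym_bd[OF isym_id h1(3), of d] s(3)[symmetric] by blast
  qed
  then show ?thesis by blast
qed

lemma cok_class_eq:
  assumes "cok_equiv_pp (int a) n H m K"
  shows "cok_class a n H = cok_class a m K"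
proof -
  have pp: "cok_equiv_pp (int (p ^ multiplicity p a)) n H m K" if "p \<in> prime_factors a" for p
  proof -
    have "p ^ multiplicity p a dvd a" by (rule multiplicity_dvd)
    then have "int (p ^ multiplicity p a) dvd int a" by (simp only: int_dvd_int_iff)
    then show ?thesis using cok_pp_dvd[OF assms] by blast
  qed
  have "cok_equiv a n H m' K' \<longleftrightarrow> cok_equiv a m K m' K'" for m' K'
    unfolding cok_equiv_def using pp cok_pp_trans cok_pp_sym by metis
  then show ?thesis unfolding cok_class_def by auto
qed



definition one_mat :: imat where "one_mat = (\<lambda>i j. 1)"

lemma inv_one: "invertible_mod q 1 one_mat"
  unfolding invertible_mod_def
  by (rule exI[of _ one_mat]) (auto simp: mat_eq_mod_def mat_mult_def one_mat_def id_mat_def cong_refl)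

lemma bU_left:
  assumes "i < n+1"
  shows "mat_mult (n+1) (block_diag n U one_mat) Y i j = (if i < n then (\<Sum>t<n. U i t * Y t j) else Y n j)"
proof -
  have "mat_mult (n+1) (block_diag n U one_mat) Y i j = (\<Sum>t<n. block_diag n U one_mat i t * Y t j) + block_diag n U one_mat i n * Y n j"
    unfolding mat_mult_def by simp
  also have "\<dots> = (if i < n then (\<Sum>t<n. U i t * Y t j) else Y n j)"
  proof (cases "i < n")
    case True
    then show ?thesis by (auto simp: block_diag_def intro: sum.cong)
  next
    case False
    then have "i = n" using assms by simp
    then show ?thesis by (auto simp: block_diag_def one_mat_def)
  qed
  finally show ?thesis .
qed

lemma bU_right:
  assumes "j < n+1"
  shows "mat_mult (n+1) Y (mat_transp (block_diag n U one_mat)) i j = (if j < n then (\<Sum>t<n. Y i t * U j t) else Y i n)"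
proof -
  have "mat_mult (n+1) Y (mat_transp (block_diag n U one_mat)) i j = (\<Sum>t<n. Y i t * block_diag n U one_mat j t) + Y i n * block_diag n U one_mat j n"
    unfolding mat_mult_def mat_transp_def by simp
  also have "\<dots> = (if j < n then (\<Sum>t<n. Y i t * U j t) else Y i n)"
  proof (cases "j < n")
    case True
    then show ?thesis by (auto simp: block_diag_def intro: sum.cong)
  next
    case False
    then have "j = n" using assms by simp
    then show ?thesis by (auto simp: block_diag_def one_mat_def)
  qed
  finally show ?thesis .
qed

lemma border_cong:
  assumes U: "invertible_mod q n U" and D: "mat_eq_mod q n D (mat_mult n (mat_mult n U D') (mat_transp U))"
    and eta: "\<forall>i<n. [\<eta> i = (\<Sum>t<n. U i t * \<eta>' t)] (mod q)" and z: "[z = z'] (mod q)"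
  shows "cong_rel q (n+1) (border n D \<eta> z) (border n D' \<eta>' z')"
proof -
  let ?U = "block_diag n U one_mat"
  let ?B = "border n D' \<eta>' z'"
  have inv: "invertible_mod q (n+1) ?U" by (rule inv_bd[OF U inv_one])
  have "[border n D \<eta> z i j = mat_mult (n+1) (mat_mult (n+1) ?U ?B) (mat_transp ?U) i j] (mod q)"
    if ij: "i < n+1" "j < n+1" for i j
  proof -
    have L: "mat_mult (n+1) ?U ?B i t = (if i < n then (\<Sum>s<n. U i s * ?B s t) else ?B n t)" for t
      by (rule bU_left[OF ij(1)])
    have R: "mat_mult (n+1) (mat_mult (n+1) ?U ?B) (mat_transp ?U) i j =
       (if j < n then (\<Sum>t<n. mat_mult (n+1) ?U ?B i t * U j t) else mat_mult (n+1) ?U ?B i n)"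
      by (rule bU_right[OF ij(2)])
    show ?thesis
    proof (cases "j < n")
      case jn: True
      show ?thesis
      proof (cases "i < n")
        case True
        have "mat_mult (n+1) (mat_mult (n+1) ?U ?B) (mat_transp ?U) i j = (\<Sum>t<n. (\<Sum>s<n. U i s * D' s t) * U j t)"
          unfolding R L using True jn by (auto simp: border_def intro!: sum.cong)
        also have "\<dots> = mat_mult n (mat_mult n U D') (mat_transp U) i j"
          by (simp add: mat_mult_def mat_transp_def)
        finally show ?thesis using D True jn unfolding mat_eq_mod_def by (simp add: border_def)
      next
        case False
        then have i: "i = n" using ij by simp
        have "mat_mult (n+1) (mat_mult (n+1) ?U ?B) (mat_transp ?U) i j = (\<Sum>t<n. U j t * \<eta>' t)"
          unfolding R L using i jn by (auto simp: border_def mult.commute intro!: sum.cong)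
        then show ?thesis using eta i jn by (simp add: border_def)
      qed
    next
      case False
      then have j: "j = n" using ij by simp
      show ?thesis
      proof (cases "i < n")
        case True
        have "mat_mult (n+1) (mat_mult (n+1) ?U ?B) (mat_transp ?U) i j = (\<Sum>t<n. U i t * \<eta>' t)"
          unfolding R L using True j by (auto simp: border_def intro!: sum.cong)
        then show ?thesis using eta True j by (simp add: border_def)
      next
        case False
        then have i: "i = n" using ij by simp
        have "mat_mult (n+1) (mat_mult (n+1) ?U ?B) (mat_transp ?U) i j = z'"
          unfolding R L using i j by (auto simp: border_def)
        then show ?thesis using z i j by (simp add: border_def)
      qed
    qed
  qed
  then show ?thesis unfolding cong_rel_def mat_eq_mod_def using inv by blast
qed



definition Emat :: "nat \<Rightarrow> nat \<Rightarrow> (nat \<Rightarrow> int) \<Rightarrow> imat" where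
  "Emat n c v = (\<lambda>i j. if i = j then 1 else if i = n \<and> j < c then v j else 0)"

lemma sum_if_less: "c \<le> (N::nat) \<Longrightarrow> (\<Sum>t<N. if t < c then f t else 0) = (\<Sum>t<c. f t :: int)"
proof -
  assume "c \<le> N"
  have "(\<Sum>t<N. if t < c then f t else 0) = sum f {t \<in> {..<N}. t < c}"
    by (rule sum.inter_filter[symmetric]) simp
  also have "{t \<in> {..<N}. t < c} = {..<c}" using \<open>c \<le> N\<close> by auto
  finally show ?thesis .
qed

lemma E_left:
  assumes "i < n+1" "c \<le> n"
  shows "mat_mult (n+1) (Emat n c v) Y i j = Y i j + (if i = n then (\<Sum>t<c. v t * Y t j) else 0)"
proof -
  have "mat_mult (n+1) (Emat n c v) Y i j = (\<Sum>t<n+1. (if i = t then Y t j else 0) + (if i = n then (if t < c then v t * Y t j else 0) else 0))"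
    unfolding mat_mult_def Emat_def using assms by (intro sum.cong) auto
  also have "\<dots> = Y i j + (if i = n then (\<Sum>t<n+1. if t < c then v t * Y t j else 0) else 0)"
    using assms(1) by (simp add: sum.distrib sum.delta)
  also have "\<dots> = Y i j + (if i = n then (\<Sum>t<c. v t * Y t j) else 0)"
    using assms(2) by (simp add: sum_if_less)
  finally show ?thesis .
qed

lemma E_right:
  assumes "j < n+1" "c \<le> n"
  shows "mat_mult (n+1) Y (mat_transp (Emat n c v)) i j = Y i j + (if j = n then (\<Sum>t<c. Y i t * v t) else 0)"
proof -
  have "mat_mult (n+1) Y (mat_transp (Emat n c v)) i j = (\<Sum>t<n+1. (if j = t then Y i t else 0) + (if j = n then (if t < c then Y i t * v t else 0) else 0))"
    unfolding mat_mult_def Emat_def mat_transp_def using assms by (intro sum.cong) auto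
  also have "\<dots> = Y i j + (if j = n then (\<Sum>t<n+1. if t < c then Y i t * v t else 0) else 0)"
    using assms(1) by (simp add: sum.distrib sum.delta)
  also have "\<dots> = Y i j + (if j = n then (\<Sum>t<c. Y i t * v t) else 0)"
    using assms(2) by (simp add: sum_if_less)
  finally show ?thesis .
qed

lemma E_prod:
  assumes "c \<le> n"
  shows "mat_eq_mod q (n+1) (mat_mult (n+1) (Emat n c v) (Emat n c (\<lambda>t. - v t))) id_mat"
proof -
  have "mat_mult (n+1) (Emat n c v) (Emat n c (\<lambda>t. - v t)) i j = id_mat i j" if "i < n+1" "j < n+1" for i j
  proof -
    have s: "(\<Sum>t<c. v t * Emat n c (\<lambda>t. - v t) t j) = (\<Sum>t<c. if t = j then v t else 0)"
      using assms by (intro sum.cong) (auto simp: Emat_def)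
    show ?thesis unfolding E_left[OF that(1) assms] s using assms
      by (auto simp: Emat_def id_mat_def sum.delta')
  qed
  then show ?thesis by (intro meq_eqI) auto
qed

lemma E_inv: "c \<le> n \<Longrightarrow> invertible_mod q (n+1) (Emat n c v)"
  unfolding invertible_mod_def using E_prod[of c n q v] E_prod[of c n q "\<lambda>t. - v t"] by auto

lemma K1:
  assumes "mat_eq_mod q c (mat_mult c A Ai) id_mat" "i < c"
  shows "[(\<Sum>t<c. A i t * (\<Sum>j<c. Ai t j * \<eta> j)) = \<eta> i] (mod q)"
proof -
  have "(\<Sum>t<c. A i t * (\<Sum>j<c. Ai t j * \<eta> j)) = (\<Sum>j<c. mat_mult c A Ai i j * \<eta> j)"
  proof -
    have "(\<Sum>t<c. A i t * (\<Sum>j<c. Ai t j * \<eta> j)) = (\<Sum>t<c. \<Sum>j<c. A i t * Ai t j * \<eta> j)"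
      by (simp add: sum_distrib_left mult.assoc)
    also have "\<dots> = (\<Sum>j<c. \<Sum>t<c. A i t * Ai t j * \<eta> j)"
      by (rule sum.swap)
    also have "\<dots> = (\<Sum>j<c. mat_mult c A Ai i j * \<eta> j)"
      unfolding mat_mult_def by (simp add: sum_distrib_right)
    finally show ?thesis .
  qed
  also have "[\<dots> = (\<Sum>j<c. id_mat i j * \<eta> j)] (mod q)"
    using assms unfolding mat_eq_mod_def by (intro cong_sum cong_mult cong_refl) auto
  also have "(\<Sum>j<c. id_mat i j * \<eta> j) = \<eta> i"
    unfolding id_mat_def using assms(2) by (rule delta_l)
  finally show ?thesis .
qed

lemma K2:
  assumes "sym_mod q c A" "mat_eq_mod q c (mat_mult c A Ai) id_mat" "j < c"
  shows "[(\<Sum>s<c. (\<Sum>l<c. Ai s l * \<eta> l) * A s j) = \<eta> j] (mod q)"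
proof -
  have "[(\<Sum>s<c. (\<Sum>l<c. Ai s l * \<eta> l) * A s j) = (\<Sum>s<c. A j s * (\<Sum>l<c. Ai s l * \<eta> l))] (mod q)"
    using assms(1,3) unfolding sym_mod_def
    by (intro cong_sum) (simp add: mult.commute cong_mult cong_refl)
  also have "[(\<Sum>s<c. A j s * (\<Sum>l<c. Ai s l * \<eta> l)) = \<eta> j] (mod q)" by (rule K1[OF assms(2,3)])
  finally show ?thesis .
qed



lemma absorb:
  assumes As: "sym_mod q c A" and Ai: "mat_eq_mod q c (mat_mult c A Ai) id_mat"
   and xi: "\<forall>i<k. [\<xi> i = \<eta> (c+i)] (mod q)"
   and z: "[z = z' + (\<Sum>t<c. \<eta> t * (\<Sum>j<c. Ai t j * \<eta> j))] (mod q)"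
  shows "cong_rel q (c+k+1) (border (c+k) (block_diag c A H) \<eta> z) (block_diag c A (border k H \<xi> z'))"
proof -
  define n where "n = c + k"
  define v where "v = (\<lambda>t. \<Sum>j<c. Ai t j * \<eta> j)"
  define X where "X = block_diag c A (border k H \<xi> z')"
  define E where "E = Emat n c v"
  have cn: "c \<le> n" by (simp add: n_def)
  have X_AA: "X i j = A i j" if "i < c" "j < c" for i j using that by (simp add: X_def block_diag_def)
  have X_0a: "X i j = 0" if "i < c" "c \<le> j" for i j using that by (simp add: X_def block_diag_def)
  have X_0b: "X i j = 0" if "c \<le> i" "j < c" for i j using that by (simp add: X_def block_diag_def)
  have X_xi1: "X i n = \<xi> (i-c)" if "c \<le> i" "i < n" for i using that by (auto simp: X_def block_diag_def border_def n_def)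
  have X_xi2: "X n j = \<xi> (j-c)" if "c \<le> j" "j < n" for j using that by (auto simp: X_def block_diag_def border_def n_def)
  have X_z: "X n n = z'" by (auto simp: X_def block_diag_def border_def n_def)
  have X_low: "X i j = block_diag c A H i j" if "i < n" "j < n" for i j
    using that by (auto simp: X_def block_diag_def border_def n_def)
  have Y: "mat_mult (n+1) E X i j = X i j + (if i = n then (\<Sum>s<c. v s * X s j) else 0)" if "i < n+1" for i j
    unfolding E_def by (rule E_left[OF that cn])
  have F: "mat_mult (n+1) (mat_mult (n+1) E X) (mat_transp E) i j =
     mat_mult (n+1) E X i j + (if j = n then (\<Sum>t<c. mat_mult (n+1) E X i t * v t) else 0)" if "j < n+1" for i j
    unfolding E_def by (rule E_right[OF that cn])
  have main: "[border n (block_diag c A H) \<eta> z i j = mat_mult (n+1) (mat_mult (n+1) E X) (mat_transp E) i j] (mod q)"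
    if ij: "i < n+1" "j < n+1" for i j
  proof (cases "j < n")
    case jn: True
    show ?thesis
    proof (cases "i < n")
      case True
      then show ?thesis using jn ij unfolding F[OF ij(2)] Y[OF ij(1)] by (simp add: X_low border_def)
    next
      case False
      then have i: "i = n" using ij by simp
      have e: "mat_mult (n+1) (mat_mult (n+1) E X) (mat_transp E) i j = X n j + (\<Sum>s<c. v s * X s j)"
        unfolding F[OF ij(2)] Y[OF ij(1)] using i jn by simp
      show ?thesis
      proof (cases "j < c")
        case True
        have "(\<Sum>s<c. v s * X s j) = (\<Sum>s<c. (\<Sum>l<c. Ai s l * \<eta> l) * A s j)"
          using True by (intro sum.cong) (auto simp: X_AA v_def)
        then have "[X n j + (\<Sum>s<c. v s * X s j) = \<eta> j] (mod q)"
          using K2[OF As Ai True, of \<eta>] X_0b[of n j] True cn by simp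
        then show ?thesis unfolding e using i jn by (simp add: border_def cong_sym)
      next
        case False
        have "(\<Sum>s<c. v s * X s j) = 0" using False by (intro sum.neutral) (auto simp: X_0a)
        moreover have "X n j = \<xi> (j - c)" using False jn by (intro X_xi2) auto
        moreover have "[\<xi> (j - c) = \<eta> j] (mod q)" using xi[rule_format, of "j-c"] False jn by (auto simp: n_def)
        ultimately show ?thesis unfolding e using i jn by (simp add: border_def cong_sym)
      qed
    qed
  next
    case False
    then have j: "j = n" using ij by simp
    show ?thesis
    proof (cases "i < n")
      case True
      have e2: "(\<Sum>t<c. mat_mult (n+1) E X i t * v t) = (\<Sum>t<c. X i t * v t)"
      proof -
        have "mat_mult (n+1) E X i t = X i t" for t using Y[of i t] True by simp
        then show ?thesis by simp
      qed
      have e: "mat_mult (n+1) (mat_mult (n+1) E X) (mat_transp E) i j = X i n + (\<Sum>t<c. X i t * v t)"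
        unfolding F[OF ij(2)] Y[OF ij(1)] e2 using True j by simp
      show ?thesis
      proof (cases "i < c")
        case ic: True
        have "(\<Sum>t<c. X i t * v t) = (\<Sum>t<c. A i t * (\<Sum>l<c. Ai t l * \<eta> l))"
          using ic by (intro sum.cong) (auto simp: X_AA v_def)
        then have "[X i n + (\<Sum>t<c. X i t * v t) = \<eta> i] (mod q)"
          using K1[OF Ai ic, of \<eta>] X_0a[of i n] ic cn by simp
        then show ?thesis unfolding e using True j by (simp add: border_def cong_sym)
      next
        case ic: False
        have "(\<Sum>t<c. X i t * v t) = 0" using ic by (intro sum.neutral) (auto simp: X_0b)
        moreover have "X i n = \<xi> (i - c)" using ic True by (intro X_xi1) auto
        moreover have "[\<xi> (i - c) = \<eta> i] (mod q)" using xi[rule_format, of "i-c"] ic True by (auto simp: n_def)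
        ultimately show ?thesis unfolding e using True j by (simp add: border_def cong_sym)
      qed
    next
      case False
      then have i: "i = n" using ij by simp
      have Yn: "mat_mult (n+1) E X n t = (\<Sum>s<c. v s * A s t)" if "t < c" for t
      proof -
        have "mat_mult (n+1) E X n t = X n t + (\<Sum>s<c. v s * X s t)" using Y[of n t] by simp
        also have "X n t = 0" using that cn by (intro X_0b) auto
        also have "(\<Sum>s<c. v s * X s t) = (\<Sum>s<c. v s * A s t)"
          using that by (intro sum.cong) (auto simp: X_AA)
        finally show ?thesis by simp
      qed
      have Ynn: "mat_mult (n+1) E X n n = z'"
      proof -
        have "mat_mult (n+1) E X n n = X n n + (\<Sum>s<c. v s * X s n)" using Y[of n n] by simp
        also have "(\<Sum>s<c. v s * X s n) = 0" using cn by (intro sum.neutral) (auto simp: X_0a)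
        finally show ?thesis by (simp add: X_z)
      qed
      have e: "mat_mult (n+1) (mat_mult (n+1) E X) (mat_transp E) i j = z' + (\<Sum>t<c. (\<Sum>s<c. v s * A s t) * v t)"
      proof -
        have "(\<Sum>t<c. mat_mult (n+1) E X n t * v t) = (\<Sum>t<c. (\<Sum>s<c. v s * A s t) * v t)"
          by (rule sum.cong[OF refl]) (simp only: Yn lessThan_iff)
        then show ?thesis using F[OF ij(2)] i j Ynn by simp
      qed
      have h: "[(\<Sum>t<c. (\<Sum>s<c. v s * A s t) * v t) = (\<Sum>t<c. \<eta> t * v t)] (mod q)"
      proof (rule cong_sum)
        fix t assume "t \<in> {..<c}"
        then have "[(\<Sum>s<c. v s * A s t) = \<eta> t] (mod q)" unfolding v_def using K2[OF As Ai] by simp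
        then show "[(\<Sum>s<c. v s * A s t) * v t = \<eta> t * v t] (mod q)" by (rule cong_mult[OF _ cong_refl])
      qed
      have h2: "[z' + (\<Sum>t<c. (\<Sum>s<c. v s * A s t) * v t) = z' + (\<Sum>t<c. \<eta> t * v t)] (mod q)"
        by (rule cong_add[OF cong_refl h])
      have z2: "[z' + (\<Sum>t<c. \<eta> t * v t) = z] (mod q)" using z unfolding v_def by (rule cong_sym)
      have "[z' + (\<Sum>t<c. (\<Sum>s<c. v s * A s t) * v t) = z] (mod q)"
        by (rule cong_trans[OF h2 z2])
      then show ?thesis unfolding e using i j by (simp add: border_def cong_sym)
    qed
  qed
  have "mat_eq_mod q (n+1) (border n (block_diag c A H) \<eta> z) (mat_mult (n+1) (mat_mult (n+1) E X) (mat_transp E))"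
    unfolding mat_eq_mod_def using main by blast
  moreover have "invertible_mod q (n+1) E" unfolding E_def by (rule E_inv[OF cn])
  ultimately show ?thesis unfolding cong_rel_def X_def n_def by blast
qed



lemma prod_pp_dvd:
  fixes d :: int
  assumes "finite S" "\<forall>p\<in>S. prime p" "\<forall>p\<in>S. int (p ^ f p) dvd d"
  shows "int (\<Prod>p\<in>S. p ^ f p) dvd d"
  using assms
proof (induction S rule: finite_induct)
  case empty
  then show ?case by simp
next
  case (insert p S)
  have cop: "coprime (p ^ f p) (\<Prod>r\<in>S. r ^ f r)"
  proof (rule prod_coprime_right)
    fix r assume "r \<in> S"
    then have "coprime p r" using insert by (intro primes_coprime) auto
    then show "coprime (p ^ f p) (r ^ f r)" by simp
  qed
  have cop2: "coprime (int (p ^ f p)) (int (\<Prod>r\<in>S. r ^ f r))"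
    using cop by (simp only: coprime_int_iff)
  have d1: "int (p ^ f p) dvd d" using insert.prems by simp
  have d2: "int (\<Prod>r\<in>S. r ^ f r) dvd d" using insert.prems insert.IH by simp
  have "int (p ^ f p) * int (\<Prod>r\<in>S. r ^ f r) dvd d"
    by (rule divides_mult[OF d1 d2 cop2])
  moreover have "int (\<Prod>p\<in>insert p S. p ^ f p) = int (p ^ f p) * int (\<Prod>r\<in>S. r ^ f r)"
    using insert.hyps by (simp del: of_nat_prod of_nat_power)
  ultimately show ?case by simp
qed

lemma lcrt:
  fixes x y :: int
  assumes "a > 0" "\<forall>p\<in>prime_factors a. [x = y] (mod int (p ^ multiplicity p a))"
  shows "[x = y] (mod int a)"
proof -
  have "int (\<Prod>p\<in>prime_factors a. p ^ multiplicity p a) dvd (x - y)"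
    by (rule prod_pp_dvd) (use assms in \<open>auto simp: cong_iff_dvd_diff\<close>)
  then show ?thesis using prime_factorization_nat[OF assms(1)] by (simp add: cong_iff_dvd_diff)
qed

lemma lcrt_meq:
  assumes "a > 0" "\<forall>p\<in>prime_factors a. mat_eq_mod (int (p ^ multiplicity p a)) n X Y"
  shows "mat_eq_mod (int a) n X Y"
  using assms lcrt unfolding mat_eq_mod_def by blast

lemma lcrt_sym:
  assumes "a > 0" "\<forall>p\<in>prime_factors a. sym_mod (int (p ^ multiplicity p a)) n X"
  shows "sym_mod (int a) n X"
  using assms lcrt unfolding sym_mod_def by blast

lemma idempotents:
  assumes "p \<in> prime_factors a"
  shows "\<exists>e::int. \<forall>r\<in>prime_factors a. [e = (if r = p then 1 else 0)] (mod int (r ^ multiplicity r a))"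
proof -
  have "\<exists>x. \<forall>r\<in>prime_factors a. [x = (if r = p then 1 else 0)] (mod (r ^ multiplicity r a))"
  proof (rule chinese_remainder_nat)
    show "finite (prime_factors a)" by simp
    show "\<forall>i\<in>prime_factors a. \<forall>j\<in>prime_factors a. i \<noteq> j \<longrightarrow> coprime (i ^ multiplicity i a) (j ^ multiplicity j a)"
      by (auto intro: primes_coprime)
  qed
  then obtain x where x: "\<forall>r\<in>prime_factors a. [x = (if r = p then 1 else 0)] (mod (r ^ multiplicity r a))" by blast
  have "[int x = (if r = p then 1 else 0)] (mod int (r ^ multiplicity r a))" if "r \<in> prime_factors a" for r
    using x that cong_int_iff[of x "if r = p then 1 else 0" "r ^ multiplicity r a"] by (auto split: if_splits)
  then show ?thesis by blast
qed

definition comb :: "nat \<Rightarrow> (nat \<Rightarrow> int) \<Rightarrow> (nat \<Rightarrow> imat) \<Rightarrow> imat" where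
  "comb a e F = (\<lambda>i j. \<Sum>p\<in>prime_factors a. e p * F p i j)"

lemma comb_cong:
  assumes e: "\<forall>p\<in>prime_factors a. \<forall>r\<in>prime_factors a. [e p = (if r = p then 1 else 0)] (mod int (r ^ multiplicity r a))"
    and p: "p \<in> prime_factors a"
  shows "mat_eq_mod (int (p ^ multiplicity p a)) n (comb a e F) (F p)"
  unfolding mat_eq_mod_def
proof (intro allI impI)
  fix i j
  have "[(\<Sum>r\<in>prime_factors a. e r * F r i j) = (\<Sum>r\<in>prime_factors a. (if r = p then 1 else 0) * F r i j)] (mod int (p ^ multiplicity p a))"
  proof (rule cong_sum)
    fix r assume r: "r \<in> prime_factors a"
    have "[e r = (if p = r then 1 else 0)] (mod int (p ^ multiplicity p a))" using e r p by blast
    then have "[e r * F r i j = (if p = r then 1 else 0) * F r i j] (mod int (p ^ multiplicity p a))"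
      by (rule cong_mult[OF _ cong_refl])
    then show "[e r * F r i j = (if r = p then 1 else 0) * F r i j] (mod int (p ^ multiplicity p a))"
      by (simp add: eq_commute[of p r])
  qed
  also have "(\<Sum>r\<in>prime_factors a. (if r = p then 1 else 0) * F r i j) = F p i j"
  proof -
    have "(\<Sum>r\<in>prime_factors a. (if r = p then 1 else 0) * F r i j) = (\<Sum>r\<in>prime_factors a. if r = p then F r i j else 0)"
      by (rule sum.cong) auto
    then show ?thesis using p by simp
  qed
  finally show "[comb a e F i j = F p i j] (mod int (p ^ multiplicity p a))" by (simp add: comb_def)
qed



lemma cok_crt:
  assumes a: "a \<ge> 2" and ce: "cok_equiv a n1 H n2 H'"
  shows "cok_equiv_pp (int a) n1 H n2 H'"
proof -
  define P where "P = prime_factors a"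
  define Q where "Q = (\<lambda>p. int (p ^ multiplicity p a))"
  have a0: "a > 0" using a by simp
  have finP: "finite P" by (simp add: P_def)
  obtain p0 where "prime p0" "p0 dvd a" using prime_factor_nat[of a] a by auto
  then have p0: "p0 \<in> P" using a0 by (simp add: P_def in_prime_factors_iff)
  have "\<forall>p\<in>P. \<exists>c0. \<forall>e\<ge>c0. \<exists>c' A A'. e + n1 = c' + n2 \<and> isym (Q p) e A \<and> isym (Q p) c' A' \<and>
     cong_rel (Q p) (e+n1) (block_diag e A H) (block_diag c' A' H')"
    using ce cok_pp_pad unfolding cok_equiv_def P_def Q_def by blast
  from bchoice[OF this] obtain c0 where c0: "\<forall>p\<in>P. \<forall>e\<ge>c0 p. \<exists>c' A A'. e + n1 = c' + n2 \<and> isym (Q p) e A \<and> isym (Q p) c' A' \<and>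
     cong_rel (Q p) (e+n1) (block_diag e A H) (block_diag c' A' H')"
    by blast
  define e where "e = (\<Sum>p\<in>P. c0 p)"
  have ge: "c0 p \<le> e" if "p \<in> P" for p unfolding e_def using finP that by (simp add: member_le_sum)
  have ex: "\<forall>p\<in>P. \<exists>c' A A'. e + n1 = c' + n2 \<and> isym (Q p) e A \<and> isym (Q p) c' A' \<and>
     cong_rel (Q p) (e+n1) (block_diag e A H) (block_diag c' A' H')"
    using c0 ge by blast
  define c' where "c' = e + n1 - n2"
  define N where "N = e + n1"
  have n2le: "n2 \<le> e + n1" using ex p0 by fastforce
  have cN: "c' + n2 = N" using n2le by (simp add: c'_def N_def)
  have "\<forall>p\<in>P. \<exists>T::nat \<Rightarrow> imat.
      sym_mod (Q p) e (T 0) \<and> mat_eq_mod (Q p) e (mat_mult e (T 0) (T 1)) id_mat \<and> mat_eq_mod (Q p) e (mat_mult e (T 1) (T 0)) id_mat \<and>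
      sym_mod (Q p) c' (T 2) \<and> mat_eq_mod (Q p) c' (mat_mult c' (T 2) (T 3)) id_mat \<and> mat_eq_mod (Q p) c' (mat_mult c' (T 3) (T 2)) id_mat \<and>
      mat_eq_mod (Q p) N (mat_mult N (T 4) (T 5)) id_mat \<and> mat_eq_mod (Q p) N (mat_mult N (T 5) (T 4)) id_mat \<and>
      mat_eq_mod (Q p) N (block_diag e (T 0) H) (mat_mult N (mat_mult N (T 4) (block_diag c' (T 2) H')) (mat_transp (T 4)))"
  proof
    fix p assume p: "p \<in> P"
    obtain cc A A' where h: "e + n1 = cc + n2" "isym (Q p) e A" "isym (Q p) cc A'"
      "cong_rel (Q p) (e+n1) (block_diag e A H) (block_diag cc A' H')" using ex p by blast
    have cc: "cc = c'" using h(1) by (simp add: c'_def)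
    obtain Ai where Ai: "mat_eq_mod (Q p) e (mat_mult e A Ai) id_mat" "mat_eq_mod (Q p) e (mat_mult e Ai A) id_mat"
      using h(2) unfolding isym_def invertible_mod_def by blast
    obtain Ai' where Ai': "mat_eq_mod (Q p) c' (mat_mult c' A' Ai') id_mat" "mat_eq_mod (Q p) c' (mat_mult c' Ai' A') id_mat"
      using h(3) unfolding isym_def invertible_mod_def cc by blast
    obtain U where U: "invertible_mod (Q p) N U" "mat_eq_mod (Q p) N (block_diag e A H) (mat_mult N (mat_mult N U (block_diag c' A' H')) (mat_transp U))"
      using h(4) unfolding cong_rel_def cc N_def by blast
    obtain V where V: "mat_eq_mod (Q p) N (mat_mult N U V) id_mat" "mat_eq_mod (Q p) N (mat_mult N V U) id_mat"
      using U(1) unfolding invertible_mod_def by blast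
    define T where "T = (\<lambda>k::nat. if k = 0 then A else if k = 1 then Ai else if k = 2 then A' else if k = 3 then Ai' else if k = 4 then U else V)"
    show "\<exists>T::nat \<Rightarrow> imat.
      sym_mod (Q p) e (T 0) \<and> mat_eq_mod (Q p) e (mat_mult e (T 0) (T 1)) id_mat \<and> mat_eq_mod (Q p) e (mat_mult e (T 1) (T 0)) id_mat \<and>
      sym_mod (Q p) c' (T 2) \<and> mat_eq_mod (Q p) c' (mat_mult c' (T 2) (T 3)) id_mat \<and> mat_eq_mod (Q p) c' (mat_mult c' (T 3) (T 2)) id_mat \<and>
      mat_eq_mod (Q p) N (mat_mult N (T 4) (T 5)) id_mat \<and> mat_eq_mod (Q p) N (mat_mult N (T 5) (T 4)) id_mat \<and>
      mat_eq_mod (Q p) N (block_diag e (T 0) H) (mat_mult N (mat_mult N (T 4) (block_diag c' (T 2) H')) (mat_transp (T 4)))"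
      apply (rule exI[of _ T])
      using h(2,3) Ai Ai' U V unfolding isym_def cc by (simp add: T_def)
  qed
  from bchoice[OF this] obtain T :: "nat \<Rightarrow> nat \<Rightarrow> imat" where T: "\<forall>p\<in>P.
      sym_mod (Q p) e (T p 0) \<and> mat_eq_mod (Q p) e (mat_mult e (T p 0) (T p 1)) id_mat \<and> mat_eq_mod (Q p) e (mat_mult e (T p 1) (T p 0)) id_mat \<and>
      sym_mod (Q p) c' (T p 2) \<and> mat_eq_mod (Q p) c' (mat_mult c' (T p 2) (T p 3)) id_mat \<and> mat_eq_mod (Q p) c' (mat_mult c' (T p 3) (T p 2)) id_mat \<and>
      mat_eq_mod (Q p) N (mat_mult N (T p 4) (T p 5)) id_mat \<and> mat_eq_mod (Q p) N (mat_mult N (T p 5) (T p 4)) id_mat \<and>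
      mat_eq_mod (Q p) N (block_diag e (T p 0) H) (mat_mult N (mat_mult N (T p 4) (block_diag c' (T p 2) H')) (mat_transp (T p 4)))"
    by blast
  have "\<forall>p\<in>P. \<exists>E::int. \<forall>r\<in>P. [E = (if r = p then 1 else 0)] (mod Q r)"
    using idempotents unfolding P_def Q_def by blast
  from bchoice[OF this] obtain E where E: "\<forall>p\<in>P. \<forall>r\<in>P. [E p = (if r = p then 1 else 0)] (mod Q r)"
    by blast
  define G where "G = (\<lambda>k. comb a E (\<lambda>p. T p k))"
  have GT: "mat_eq_mod (Q p) m (G k) (T p k)" if "p \<in> P" for p m k
    unfolding G_def Q_def by (rule comb_cong) (use E that in \<open>auto simp: P_def Q_def\<close>)
  have symG: "sym_mod (Q p) m (G k)" if "p \<in> P" "sym_mod (Q p) m (T p k)" for p m k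
    unfolding sym_mod_def
  proof (intro allI impI)
    fix i j assume ij: "i < m" "j < m"
    have g1: "[G k i j = T p k i j] (mod Q p)" using GT[OF that(1), of m k] ij unfolding mat_eq_mod_def by blast
    have g2: "[G k j i = T p k j i] (mod Q p)" using GT[OF that(1), of m k] ij unfolding mat_eq_mod_def by blast
    have s: "[T p k i j = T p k j i] (mod Q p)" using that(2) ij unfolding sym_mod_def by blast
    show "[G k i j = G k j i] (mod Q p)" by (rule cong_trans[OF cong_trans[OF g1 s] cong_sym[OF g2]])
  qed
  have multG: "mat_eq_mod (Q p) m (mat_mult m (G k) (G l)) id_mat"
    if "p \<in> P" "mat_eq_mod (Q p) m (mat_mult m (T p k) (T p l)) id_mat" for p m k l
    by (rule meq_trans[OF meq_mult[OF GT[OF that(1)] GT[OF that(1)]] that(2)])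
  have mainG: "mat_eq_mod (Q p) N (block_diag e (G 0) H) (mat_mult N (mat_mult N (G 4) (block_diag c' (G 2) H')) (mat_transp (G 4)))"
    if p: "p \<in> P" for p
  proof -
    have b1: "mat_eq_mod (Q p) N (block_diag e (G 0) H) (block_diag e (T p 0) H)"
      unfolding N_def by (rule bd_meq[OF GT[OF p] meq_refl])
    have b2: "mat_eq_mod (Q p) N (block_diag c' (G 2) H') (block_diag c' (T p 2) H')"
      unfolding cN[symmetric] by (rule bd_meq[OF GT[OF p] meq_refl])
    have b3: "mat_eq_mod (Q p) N (mat_mult N (mat_mult N (T p 4) (block_diag c' (T p 2) H')) (mat_transp (T p 4)))
        (mat_mult N (mat_mult N (G 4) (block_diag c' (G 2) H')) (mat_transp (G 4)))"
      by (rule meq_mult[OF meq_mult[OF meq_sym[OF GT[OF p]] meq_sym[OF b2]] meq_transp[OF meq_sym[OF GT[OF p]]]])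
    have t: "mat_eq_mod (Q p) N (block_diag e (T p 0) H) (mat_mult N (mat_mult N (T p 4) (block_diag c' (T p 2) H')) (mat_transp (T p 4)))"
      using T p by blast
    show ?thesis by (rule meq_trans[OF b1 meq_trans[OF t b3]])
  qed
  have L1: "sym_mod (int a) e (G 0)" "sym_mod (int a) c' (G 2)"
    using lcrt_sym[OF a0] symG T unfolding P_def Q_def by blast+
  have L2: "mat_eq_mod (int a) e (mat_mult e (G 0) (G 1)) id_mat" "mat_eq_mod (int a) e (mat_mult e (G 1) (G 0)) id_mat"
     "mat_eq_mod (int a) c' (mat_mult c' (G 2) (G 3)) id_mat" "mat_eq_mod (int a) c' (mat_mult c' (G 3) (G 2)) id_mat"
     "mat_eq_mod (int a) N (mat_mult N (G 4) (G 5)) id_mat" "mat_eq_mod (int a) N (mat_mult N (G 5) (G 4)) id_mat"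
    using lcrt_meq[OF a0] multG T unfolding P_def Q_def by blast+
  have L3: "mat_eq_mod (int a) N (block_diag e (G 0) H) (mat_mult N (mat_mult N (G 4) (block_diag c' (G 2) H')) (mat_transp (G 4)))"
    using lcrt_meq[OF a0] mainG unfolding P_def Q_def by blast
  have I: "isym (int a) e (G 0)" "isym (int a) c' (G 2)" "invertible_mod (int a) N (G 4)"
    unfolding isym_def invertible_mod_def using L1 L2 by blast+
  show ?thesis unfolding cok_pp_iff cong_rel_def
    apply (rule exI[of _ e], rule exI[of _ c'], rule exI[of _ "G 0"], rule exI[of _ "G 2"])
    using I L3 cN unfolding N_def by auto
qed



lemma ss_sub: "sample_space a m \<subseteq> (\<lambda>(z, f). (z, \<lambda>i. if i < m then f i else 0)) ` ({0..<int a} \<times> PiE {..<m} (\<lambda>_. {0..<int a}))"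
proof
  fix x :: "int \<times> (nat \<Rightarrow> int)"
  assume xs: "x \<in> sample_space a m"
  obtain z f where x: "x = (z, f)" by (cases x)
  have h1: "z \<in> {0..<int a}" using xs unfolding x sample_space_def by simp
  have h2: "\<forall>i<m. f i \<in> {0..<int a}" using xs unfolding x sample_space_def by simp
  have h3: "\<forall>i\<ge>m. f i = 0" using xs unfolding x sample_space_def by simp
  have e: "(\<lambda>i. if i < m then restrict f {..<m} i else 0) = f"
  proof
    fix i show "(if i < m then restrict f {..<m} i else 0) = f i" using h3 by (cases "i < m") auto
  qed
  have mem: "(z, restrict f {..<m}) \<in> {0..<int a} \<times> PiE {..<m} (\<lambda>_. {0..<int a})"
    using h1 h2 by (simp add: restrict_PiE_iff)
  show "x \<in> (\<lambda>(z, f). (z, \<lambda>i. if i < m then f i else 0)) ` ({0..<int a} \<times> PiE {..<m} (\<lambda>_. {0..<int a}))"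
    unfolding x by (rule image_eqI[OF _ mem]) (simp only: e prod.case)
qed

lemma ss_finite: "finite (sample_space a m)"
  by (rule finite_subset[OF ss_sub]) (intro finite_imageI finite_cartesian_product finite_PiE; simp)

lemma ss_nonempty: "a > 0 \<Longrightarrow> sample_space a m \<noteq> {}"
proof -
  assume "a > 0"
  then have "(0, \<lambda>_. 0) \<in> sample_space a m" by (simp add: sample_space_def)
  then show ?thesis by blast
qed
  
lemma pmf_of_set_times:
  assumes "A \<noteq> {}" "finite A" "B \<noteq> {}" "finite B"
  shows "pmf_of_set (A \<times> B) = pair_pmf (pmf_of_set A) (pmf_of_set B)"
proof (rule pmf_eqI)
  fix x :: "'a \<times> 'b"
  obtain u v where x: "x = (u, v)" by (cases x)
  show "pmf (pmf_of_set (A \<times> B)) x = pmf (pair_pmf (pmf_of_set A) (pmf_of_set B)) x"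
    using assms unfolding x by (simp add: pmf_pair card_cartesian_product indicator_def)
qed

lemma endo_pmf:
  assumes "finite A" "A \<noteq> {}" "f ` A \<subseteq> A" "inj_on f A"
  shows "map_pmf f (pmf_of_set A) = pmf_of_set A"
proof -
  have "f ` A = A" using endo_inj_surj assms by blast
  then show ?thesis using map_pmf_of_set_inj[OF assms(4,2,1)] by simp
qed

lemma ext_step:
  assumes a: "a > 0" and mn: "m \<le> n" and f: "\<And>z \<eta> \<eta>'. (\<forall>i<m. \<eta> i = \<eta>' i) \<Longrightarrow> f (z, \<eta>) = f (z, \<eta>')"
  shows "map_pmf f (pmf_of_set (sample_space a (Suc n))) = map_pmf f (pmf_of_set (sample_space a n))"
proof -
  define h where "h = (\<lambda>(z::int, \<eta>::nat \<Rightarrow> int). ((z, \<eta>(n := 0)), \<eta> n))"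
  define h' where "h' = (\<lambda>((z::int, \<eta>::nat \<Rightarrow> int), x::int). (z, \<eta>(n := x)))"
  have bij: "bij_betw h (sample_space a (Suc n)) (sample_space a n \<times> {0..<int a})"
  proof (rule bij_betw_byWitness[where f' = h'])
    show "\<forall>x\<in>sample_space a (Suc n). h' (h x) = x" by (auto simp: h_def h'_def)
    show "\<forall>y\<in>sample_space a n \<times> {0..<int a}. h (h' y) = y"
      by (auto simp: h_def h'_def sample_space_def)
    show "h ` sample_space a (Suc n) \<subseteq> sample_space a n \<times> {0..<int a}"
      by (auto simp: h_def sample_space_def)
    show "h' ` (sample_space a n \<times> {0..<int a}) \<subseteq> sample_space a (Suc n)"
      by (auto simp: h'_def sample_space_def less_Suc_eq)
  qed
  have mh: "map_pmf h (pmf_of_set (sample_space a (Suc n))) = pair_pmf (pmf_of_set (sample_space a n)) (pmf_of_set {0..<int a})"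
    using map_pmf_of_set_bij_betw[OF bij ss_nonempty[OF a] ss_finite] pmf_of_set_times[OF ss_nonempty[OF a] ss_finite, of "{0..<int a}"] a
    by simp
  have "map_pmf f (pmf_of_set (sample_space a (Suc n))) = map_pmf (\<lambda>x. f (fst (h x))) (pmf_of_set (sample_space a (Suc n)))"
  proof (rule map_pmf_cong[OF refl])
    fix x assume "x \<in> set_pmf (pmf_of_set (sample_space a (Suc n)))"
    obtain z \<eta> where x: "x = (z, \<eta>)" by (cases x)
    have "f (z, \<eta>) = f (z, \<eta>(n := 0))" by (rule f) (use mn in auto)
    then show "f x = f (fst (h x))" by (simp add: x h_def)
  qed
  also have "\<dots> = map_pmf (\<lambda>y. f (fst y)) (map_pmf h (pmf_of_set (sample_space a (Suc n))))"
    by (simp add: map_pmf_comp)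
  also have "\<dots> = map_pmf f (map_pmf fst (pair_pmf (pmf_of_set (sample_space a n)) (pmf_of_set {0..<int a})))"
    unfolding mh by (simp add: map_pmf_comp)
  also have "\<dots> = map_pmf f (pmf_of_set (sample_space a n))" by (simp add: map_fst_pair_pmf)
  finally show ?thesis .
qed

lemma ext_pmf:
  assumes a: "a > 0" and mn: "m \<le> n" and f: "\<And>z \<eta> \<eta>'. (\<forall>i<m. \<eta> i = \<eta>' i) \<Longrightarrow> f (z, \<eta>) = f (z, \<eta>')"
  shows "map_pmf f (pmf_of_set (sample_space a n)) = map_pmf f (pmf_of_set (sample_space a m))"
  using mn
proof (induction n rule: dec_induct)
  case base
  then show ?case by simp
next
  case (step n)
  have mn': "m \<le> n" using step by simp
  have "map_pmf f (pmf_of_set (sample_space a (Suc n))) = map_pmf f (pmf_of_set (sample_space a n))"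
    by (rule ext_step[OF a mn']) (rule f)
  then show ?case using step by simp
qed



lemma stab:
  assumes "cong_rel q (c+k) X (block_diag c A Y)" "isym q c A"
  shows "cok_equiv_pp q (c+k) X k Y"
  unfolding cok_pp_iff
  apply (rule exI[of _ 0], rule exI[of _ c], rule exI[of _ id_mat], rule exI[of _ A])
  using assms isym_id[of q 0] by (simp add: bd_zero)

lemma cong_cok: "cong_rel q k X Y \<Longrightarrow> cok_equiv_pp q k X k Y"
  unfolding cok_pp_iff
  apply (rule exI[of _ 0], rule exI[of _ 0], rule exI[of _ id_mat], rule exI[of _ id_mat])
  using isym_id[of q 0] by (simp add: bd_zero)

lemma border_dep: "(\<forall>i<m. \<xi> i = \<xi>' i) \<Longrightarrow> border m M \<xi> z = border m M \<xi>' z"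
  by (auto simp: border_def fun_eq_iff)

lemma UV_eta:
  assumes "mat_eq_mod q n (mat_mult n U V) id_mat" "i < n"
  shows "[\<eta> i = (\<Sum>t<n. U i t * ((\<Sum>s<n. V t s * \<eta> s) mod q))] (mod q)"
proof -
  have "[(\<Sum>t<n. U i t * ((\<Sum>s<n. V t s * \<eta> s) mod q)) = (\<Sum>t<n. U i t * (\<Sum>s<n. V t s * \<eta> s))] (mod q)"
    by (intro cong_sum cong_mult cong_refl) (simp add: cong_def)
  moreover have "[(\<Sum>t<n. U i t * (\<Sum>s<n. V t s * \<eta> s)) = \<eta> i] (mod q)"
    by (rule K1[OF assms])
  ultimately show ?thesis using cong_sym cong_trans by blast
qed

lemma side:
  assumes a: "a \<ge> 2" and iA: "isym (int a) c A" and Ai: "mat_eq_mod (int a) c (mat_mult c A Ai) id_mat"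
    and mN: "m \<le> N" "N \<le> c + m"
  shows "map_pmf (\<lambda>(z, xi). cok_class a (m + 1) (border m M xi z)) (pmf_of_set (sample_space a N))
       = map_pmf (\<lambda>(z, \<eta>). cok_class a (c + m + 1) (border (c+m) (block_diag c A M) \<eta> z)) (pmf_of_set (sample_space a (c+m)))"
proof -
  define f1 where "f1 = (\<lambda>(z, xi). cok_class a (m + 1) (border m M xi z))"
  define F where "F = (\<lambda>(z, \<eta>). cok_class a (c + m + 1) (border (c+m) (block_diag c A M) \<eta> z))"
  define n where "n = c + m"
  have a0: "a > 0" using a by simp
  have dep: "f1 (z, \<eta>) = f1 (z, \<eta>')" if "\<forall>i<m. \<eta> i = \<eta>' i" for z \<eta> \<eta>'
    unfolding f1_def using border_dep[OF that] by simp
  have h1: "map_pmf f1 (pmf_of_set (sample_space a N)) = map_pmf f1 (pmf_of_set (sample_space a m))"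
    by (rule ext_pmf[OF a0 mN(1)]) (rule dep)
  have mn: "m \<le> n" by (simp add: n_def)
  have h2: "map_pmf f1 (pmf_of_set (sample_space a n)) = map_pmf f1 (pmf_of_set (sample_space a m))"
    by (rule ext_pmf[OF a0 mn]) (rule dep)
  define \<phi> where "\<phi> = (\<lambda>\<eta>::nat \<Rightarrow> int. \<Sum>t<c. \<eta> t * (\<Sum>j<c. Ai t j * \<eta> j))"
  define rot where "rot = (\<lambda>(\<eta>::nat \<Rightarrow> int) i. if i < m then \<eta> (c+i) else if i < n then \<eta> (i - m) else 0)"
  define sh where "sh = (\<lambda>(z::int, \<eta>). ((z - \<phi> \<eta>) mod int a, rot \<eta>))"
  have sh_in: "sh ` sample_space a n \<subseteq> sample_space a n"
    using a0 by (auto simp: sh_def sample_space_def rot_def n_def)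
  have rot_inj: "\<eta> = \<eta>'" if "rot \<eta> = rot \<eta>'" "\<forall>i\<ge>n. \<eta> i = 0" "\<forall>i\<ge>n. \<eta>' i = 0" for \<eta> \<eta>'
  proof
    fix i
    show "\<eta> i = \<eta>' i"
    proof (cases "i < c")
      case True
      have "rot \<eta> (i+m) = \<eta> i" "rot \<eta>' (i+m) = \<eta>' i" using True by (auto simp: rot_def n_def)
      then show ?thesis using that(1) by simp
    next
      case False
      show ?thesis
      proof (cases "i < n")
        case True
        have "rot \<eta> (i-c) = \<eta> i" "rot \<eta>' (i-c) = \<eta>' i" using True False by (auto simp: rot_def n_def)
        then show ?thesis using that(1) by simp
      next
        case False
        then show ?thesis using that(2,3) by simp
      qed
    qed
  qed
  have zrec: "z = ((z - t) mod int a + t) mod int a" if "0 \<le> z" "z < int a" for z t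
    using that by (simp add: mod_add_left_eq)
  have sh_inj: "inj_on sh (sample_space a n)"
  proof (rule inj_onI)
    fix x y assume x: "x \<in> sample_space a n" and y: "y \<in> sample_space a n" and e: "sh x = sh y"
    obtain z \<eta> where xx: "x = (z, \<eta>)" by (cases x)
    obtain z' \<eta>' where yy: "y = (z', \<eta>')" by (cases y)
    have r: "rot \<eta> = rot \<eta>'" and m: "(z - \<phi> \<eta>) mod int a = (z' - \<phi> \<eta>') mod int a"
      using e unfolding xx yy sh_def by auto
    have ee: "\<eta> = \<eta>'" by (rule rot_inj[OF r]) (use x y in \<open>auto simp: xx yy sample_space_def\<close>)
    have "z = z'" using zrec[of z "\<phi> \<eta>"] zrec[of z' "\<phi> \<eta>"] x y m unfolding ee xx yy sample_space_def by auto
    then show "x = y" using ee xx yy by simp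
  qed
  have msh: "map_pmf sh (pmf_of_set (sample_space a n)) = pmf_of_set (sample_space a n)"
    by (rule endo_pmf[OF ss_finite ss_nonempty[OF a0] sh_in sh_inj])
  have pw: "f1 (sh x) = F x" if "x \<in> sample_space a n" for x
  proof -
    obtain z \<eta> where xx: "x = (z, \<eta>)" by (cases x)
    define z' where "z' = (z - \<phi> \<eta>) mod int a"
    have zc: "[z = z' + \<phi> \<eta>] (mod int a)" unfolding z'_def by (simp add: cong_def mod_add_left_eq)
    have cr: "cong_rel (int a) (c+m+1) (border (c+m) (block_diag c A M) \<eta> z) (block_diag c A (border m M (rot \<eta>) z'))"
      by (rule absorb) (use iA Ai zc in \<open>auto simp: isym_def rot_def \<phi>_def n_def cong_refl\<close>)
    have "cok_equiv_pp (int a) (c+(m+1)) (border (c+m) (block_diag c A M) \<eta> z) (m+1) (border m M (rot \<eta>) z')"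
      by (rule stab) (use cr iA in \<open>simp_all add: add.assoc\<close>)
    then have "cok_class a (c+(m+1)) (border (c+m) (block_diag c A M) \<eta> z) = cok_class a (m+1) (border m M (rot \<eta>) z')"
      by (rule cok_class_eq)
    then show ?thesis unfolding xx F_def f1_def sh_def z'_def by (simp add: add.assoc)
  qed
  have "map_pmf f1 (pmf_of_set (sample_space a n)) = map_pmf f1 (map_pmf sh (pmf_of_set (sample_space a n)))"
    by (simp only: msh)
  also have "\<dots> = map_pmf (\<lambda>x. f1 (sh x)) (pmf_of_set (sample_space a n))" by (simp add: map_pmf_comp)
  also have "\<dots> = map_pmf F (pmf_of_set (sample_space a n))"
    by (rule map_pmf_cong[OF refl]) (use pw ss_finite ss_nonempty[OF a0] in auto)
  finally have "map_pmf f1 (pmf_of_set (sample_space a n)) = map_pmf F (pmf_of_set (sample_space a n))" .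
  then show ?thesis using h1 h2 unfolding f1_def F_def n_def by simp
qed



theorem mainTheorem7:
  fixes a n1 n2 :: nat and M M' :: imat
  assumes "a \<ge> 2" and "n1 \<ge> 1" and "n2 \<ge> 1"
    and "sym_int n1 M" and "sym_int n2 M'"
    and "cok_equiv a n1 M n2 M'"
  shows "map_pmf (\<lambda>(z, xi). cok_class a (n1 + 1) (border n1 M xi z))
            (pmf_of_set (sample_space a (max n1 n2)))
       = map_pmf (\<lambda>(z, xi). cok_class a (n2 + 1) (border n2 M' xi z))
            (pmf_of_set (sample_space a (max n1 n2)))"
proof -
  have a: "a \<ge> 2" using assms(1) .
  have a0: "a > 0" using a by simp
  have "cok_equiv_pp (int a) n1 M n2 M'" by (rule cok_crt[OF a assms(6)])
  then obtain c c' A A' where h: "c + n1 = c' + n2" "isym (int a) c A" "isym (int a) c' A'"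
     "cong_rel (int a) (c+n1) (block_diag c A M) (block_diag c' A' M')"
    unfolding cok_pp_iff by blast
  define n where "n = c + n1"
  have n1n: "n1 \<le> n" by (simp add: n_def)
  have n': "c' + n2 = n" using h(1) by (simp add: n_def)
  obtain Ai where Ai: "mat_eq_mod (int a) c (mat_mult c A Ai) id_mat"
    using h(2) unfolding isym_def invertible_mod_def by blast
  obtain Ai' where Ai': "mat_eq_mod (int a) c' (mat_mult c' A' Ai') id_mat"
    using h(3) unfolding isym_def invertible_mod_def by blast
  obtain U where U: "invertible_mod (int a) n U"
    "mat_eq_mod (int a) n (block_diag c A M) (mat_mult n (mat_mult n U (block_diag c' A' M')) (mat_transp U))"
    using h(4) unfolding cong_rel_def n_def by blast
  obtain V where V: "mat_eq_mod (int a) n (mat_mult n U V) id_mat"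
    using U(1) unfolding invertible_mod_def by blast
  define F1 where "F1 = (\<lambda>(z, \<eta>). cok_class a (n + 1) (border n (block_diag c A M) \<eta> z))"
  define F2 where "F2 = (\<lambda>(z, \<eta>). cok_class a (n + 1) (border n (block_diag c' A' M') \<eta> z))"
  have L: "map_pmf (\<lambda>(z, xi). cok_class a (n1 + 1) (border n1 M xi z)) (pmf_of_set (sample_space a (max n1 n2)))
      = map_pmf F1 (pmf_of_set (sample_space a n))"
    using side[OF a h(2) Ai, of n1 "max n1 n2" M] h(1) unfolding F1_def n_def by simp
  have R: "map_pmf (\<lambda>(z, xi). cok_class a (n2 + 1) (border n2 M' xi z)) (pmf_of_set (sample_space a (max n1 n2)))
      = map_pmf F2 (pmf_of_set (sample_space a n))"
    using side[OF a h(3) Ai', of n2 "max n1 n2" M'] n' n1n unfolding F2_def by simp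
  define T where "T = (\<lambda>(z::int, \<eta>::nat \<Rightarrow> int). (z, \<lambda>i. if i < n then (\<Sum>s<n. V i s * \<eta> s) mod int a else 0))"
  have T_in: "T ` sample_space a n \<subseteq> sample_space a n"
    using a0 by (auto simp: T_def sample_space_def)
  have eta: "[\<eta> i = (\<Sum>t<n. U i t * snd (T (z, \<eta>)) t)] (mod int a)" if "i < n" for z \<eta> i
  proof -
    have "(\<Sum>t<n. U i t * snd (T (z, \<eta>)) t) = (\<Sum>t<n. U i t * ((\<Sum>s<n. V t s * \<eta> s) mod int a))"
      by (rule sum.cong) (auto simp: T_def)
    then show ?thesis using UV_eta[OF V that, of \<eta>] by simp
  qed
  have T_inj: "inj_on T (sample_space a n)"
  proof (rule inj_onI)
    fix x y assume x: "x \<in> sample_space a n" and y: "y \<in> sample_space a n" and e: "T x = T y"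
    obtain z \<eta> where xx: "x = (z, \<eta>)" by (cases x)
    obtain z' \<eta>' where yy: "y = (z', \<eta>')" by (cases y)
    have zz: "z = z'" using e unfolding xx yy T_def by simp
    have s: "snd (T (z, \<eta>)) = snd (T (z', \<eta>'))" using e unfolding xx yy by simp
    have "\<eta> i = \<eta>' i" for i
    proof (cases "i < n")
      case True
      have "[\<eta> i = \<eta>' i] (mod int a)"
        using eta[OF True, of \<eta> z] eta[OF True, of \<eta>' z'] unfolding s by (meson cong_sym cong_trans)
      then show ?thesis using x y True unfolding xx yy sample_space_def
        by (intro cong_less_imp_eq_int) auto
    next
      case False
      then show ?thesis using x y unfolding xx yy sample_space_def by auto
    qed
    then show "x = y" using zz xx yy by auto
  qed
  have mT: "map_pmf T (pmf_of_set (sample_space a n)) = pmf_of_set (sample_space a n)"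
    by (rule endo_pmf[OF ss_finite ss_nonempty[OF a0] T_in T_inj])
  have pw: "F2 (T x) = F1 x" for x
  proof -
    obtain z \<eta> where xx: "x = (z, \<eta>)" by (cases x)
    have cr: "cong_rel (int a) (n+1) (border n (block_diag c A M) \<eta> z) (border n (block_diag c' A' M') (snd (T (z, \<eta>))) z)"
      by (rule border_cong[OF U]) (use eta in \<open>auto simp: cong_refl\<close>)
    have "cok_class a (n+1) (border n (block_diag c A M) \<eta> z) = cok_class a (n+1) (border n (block_diag c' A' M') (snd (T (z, \<eta>))) z)"
      by (rule cok_class_eq[OF cong_cok[OF cr]])
    then show ?thesis unfolding xx F1_def F2_def by (simp add: T_def)
  qed
  have "map_pmf F2 (pmf_of_set (sample_space a n)) = map_pmf F2 (map_pmf T (pmf_of_set (sample_space a n)))"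
    by (simp only: mT)
  also have "\<dots> = map_pmf (\<lambda>x. F2 (T x)) (pmf_of_set (sample_space a n))" by (simp add: map_pmf_comp)
  also have "\<dots> = map_pmf F1 (pmf_of_set (sample_space a n))" by (simp only: pw)
  finally show ?thesis using L R by simp
qed


end
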